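(* Let $G$ be a graph on $n$ vertices belonging to $\mathcal{H}_7^{+}$, and let $\alpha$ be its corner rank. Then (i) $G^{(\alpha-3)}$ is (isomorphic to) $H_7$; (ii) $G$ is of type 1; (iii) the capture time of $G$ is $n-4$.
   Context: All graphs are finite, nonempty, and reflexive (every vertex has a loop). $N[v]$ is the closed neighborhood of $v$ (including $v$). For distinct $v,w$, $w$ strictly corners $v$ if $N[v]\subsetneq N[w]$; $v$ is then a strict corner. A vertex dominates a set if adjacent to all its vertices. Corner ranking: set $G^{(1)}=G$, $k=1$. If $G^{(k)}$ is a clique, give all its vertices rank $k$ and stop. Else if $G^{(k)}$ has no strict corners, give all its vertices rank $\infty$ and stop. Else give every strict corner of $G^{(k)}$ rank $k$, delete them to get $G^{(k+1)}$ (induced subgraph), increase $k$ and repeat. The corner rank is the largest rank of a vertex; $X_k$ is the set of rank-$k$ vertices. A graph of finite corner rank $\alpha\ge2$ is of type 1 if some (equivalently every) vertex of rank $\alpha$ dominates $V(G^{(\alpha-1)})$, and of type 0 otherwise. Cops and robbers: a cop chooses a vertex, then the robber; they alternate moves, cop first, moving to an adjacent vertex or staying; the cop wins upon occupying the robber's vertex. $G$ is cop-win if the cop can force a win; its capture time is the minimum number of cop moves (not counting initial placement) that guarantees capture. (Known: $G$ is cop-win iff its corner rank is finite, and a type-$r$ graph of corner rank $\alpha$ has capture time $\alpha-r$.) The rank cardinality vector of $G$ is $(x_\alpha,\dots,x_1)$ with $x_k=|X_k|$; $G$ realizes it. $H_7$ is the graph on $a_1,a_2,b_1,b_2,c_1,c_2,d$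 with edges $a_1a_2,a_1b_1,a_1b_2,a_2b_1,a_2b_2,a_2c_1,a_1c_2,b_1c_1,b_1c_2,b_1d,b_2c_1,b_2c_2,c_1d,c_2d$. For $k\ge0$, $\mathcal{H}_7^{+k}$ is the set of cop-win graphs realizing the vector $(2,2,2,1,\dots,1)$ of length $4+k$, and $\mathcal{H}_7^+=\bigcup_{k\ge0}\mathcal{H}_7^{+k}$. *)

theory Defs
  imports Main
begin

text \<open>A (finite, nonempty, reflexive, undirected) graph is given by a vertex set V
  and an adjacency relation E, which is only relevant on V.\<close>

definition graph :: "'a set \<Rightarrow> ('a \<Rightarrow> 'a \<Rightarrow> bool) \<Rightarrow> bool" where
  "graph V E \<longleftrightarrow> finite V \<and> V \<noteq> {} \<and> (\<forall>x\<in>V. E x x)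
     \<and> (\<forall>x\<in>V. \<forall>y\<in>V. E x y \<longleftrightarrow> E y x)"

definition nbh :: "('a \<Rightarrow> 'a \<Rightarrow> bool) \<Rightarrow> 'a set \<Rightarrow> 'a \<Rightarrow> 'a set" where
  "nbh E S v = {w \<in> S. E v w}"

definition strict_corners :: "('a \<Rightarrow> 'a \<Rightarrow> bool) \<Rightarrow> 'a set \<Rightarrow> 'a set" where
  "strict_corners E S = {v \<in> S. \<exists>w\<in>S. w \<noteq> v \<and> nbh E S v \<subset> nbh E S w}"

definition is_clique :: "('a \<Rightarrow> 'a \<Rightarrow> bool) \<Rightarrow> 'a set \<Rightarrow> bool" where
  "is_clique E S \<longleftrightarrow> (\<forall>x\<in>S. \<forall>y\<in>S. E x y)"

text \<open>Vertex set of G^(k), for k \<ge> 1 (G^(1) = G; each step deletes all strict corners).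
  Once a clique or a graph without strict corners is reached, the set stays constant.\<close>
definition Gk :: "'a set \<Rightarrow> ('a \<Rightarrow> 'a \<Rightarrow> bool) \<Rightarrow> nat \<Rightarrow> 'a set" where
  "Gk V E k = ((\<lambda>S. S - strict_corners E S) ^^ (k - 1)) V"

definition finite_corner_rank :: "'a set \<Rightarrow> ('a \<Rightarrow> 'a \<Rightarrow> bool) \<Rightarrow> bool" where
  "finite_corner_rank V E \<longleftrightarrow> (\<exists>k\<ge>1. is_clique E (Gk V E k))"

text \<open>Corner rank (meaningful when finite): the stage at which a clique is reached.\<close>
definition corner_rank :: "'a set \<Rightarrow> ('a \<Rightarrow> 'a \<Rightarrow> bool) \<Rightarrow> nat" where
  "corner_rank V E = (LEAST k. k \<ge> 1 \<and> is_clique E (Gk V E k))"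

definition rank_set :: "'a set \<Rightarrow> ('a \<Rightarrow> 'a \<Rightarrow> bool) \<Rightarrow> nat \<Rightarrow> 'a set" where
  "rank_set V E k =
     (if 1 \<le> k \<and> k < corner_rank V E then Gk V E k - Gk V E (k + 1)
      else if k = corner_rank V E then Gk V E k else {})"

definition rank_vector :: "'a set \<Rightarrow> ('a \<Rightarrow> 'a \<Rightarrow> bool) \<Rightarrow> nat list" where
  "rank_vector V E = map (\<lambda>j. card (rank_set V E j)) (rev [1..<corner_rank V E + 1])"

definition realizes :: "'a set \<Rightarrow> ('a \<Rightarrow> 'a \<Rightarrow> bool) \<Rightarrow> nat list \<Rightarrow> bool" where
  "realizes V E xs \<longleftrightarrow> finite_corner_rank V E \<and> rank_vector V E = xs"

definition type1 :: "'a set \<Rightarrow> ('a \<Rightarrow> 'a \<Rightarrow> bool) \<Rightarrow> bool" where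
  "type1 V E \<longleftrightarrow> finite_corner_rank V E \<and> corner_rank V E \<ge> 2 \<and>
     (\<exists>v \<in> rank_set V E (corner_rank V E). \<forall>w \<in> Gk V E (corner_rank V E - 1). E v w)"

text \<open>Cops and robbers. cop_wins_in V E n c r: with the cop on c and the robber on r,
  cop to move, the cop can guarantee capture within n further cop moves.\<close>
fun cop_wins_in :: "'a set \<Rightarrow> ('a \<Rightarrow> 'a \<Rightarrow> bool) \<Rightarrow> nat \<Rightarrow> 'a \<Rightarrow> 'a \<Rightarrow> bool" where
  "cop_wins_in V E 0 c r \<longleftrightarrow> c = r"
| "cop_wins_in V E (Suc n) c r \<longleftrightarrow> c = r \<or>
     (\<exists>c'\<in>V. E c c' \<and> (c' = r \<or> (\<forall>r'\<in>V. E r r' \<longrightarrow> cop_wins_in V E n c' r')))"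

definition captures_in :: "'a set \<Rightarrow> ('a \<Rightarrow> 'a \<Rightarrow> bool) \<Rightarrow> nat \<Rightarrow> bool" where
  "captures_in V E n \<longleftrightarrow> (\<exists>c\<in>V. \<forall>r\<in>V. cop_wins_in V E n c r)"

definition cop_win :: "'a set \<Rightarrow> ('a \<Rightarrow> 'a \<Rightarrow> bool) \<Rightarrow> bool" where
  "cop_win V E \<longleftrightarrow> (\<exists>n. captures_in V E n)"

definition capture_time :: "'a set \<Rightarrow> ('a \<Rightarrow> 'a \<Rightarrow> bool) \<Rightarrow> nat" where
  "capture_time V E = (LEAST n. captures_in V E n)"

definition in_H7_plus :: "'a set \<Rightarrow> ('a \<Rightarrow> 'a \<Rightarrow> bool) \<Rightarrow> bool" where
  "in_H7_plus V E \<longleftrightarrow> cop_win V E \<and>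
     (\<exists>k::nat. realizes V E ([2, 2, 2] @ replicate (k + 1) 1))"

datatype h7 = A1 | A2 | B1 | B2 | C1 | C2 | D

definition h7_edges :: "(h7 \<times> h7) set" where
  "h7_edges = {(A1,A2),(A1,B1),(A1,B2),(A2,B1),(A2,B2),(A2,C1),(A1,C2),(B1,C1),(B1,C2),
               (B1,D),(B2,C1),(B2,C2),(C1,D),(C2,D)}"

definition h7_adj :: "h7 \<Rightarrow> h7 \<Rightarrow> bool" where
  "h7_adj x y \<longleftrightarrow> x = y \<or> (x, y) \<in> h7_edges \<or> (y, x) \<in> h7_edges"

definition iso_H7 :: "('a \<Rightarrow> 'a \<Rightarrow> bool) \<Rightarrow> 'a set \<Rightarrow> bool" where
  "iso_H7 E S \<longleftrightarrow> (\<exists>f. bij_betw f S (UNIV :: h7 set) \<and>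
     (\<forall>x\<in>S. \<forall>y\<in>S. E x y \<longleftrightarrow> h7_adj (f x) (f y)))"

end

theory Submission
  imports Defs
begin


lemma sc_mem: "v \<in> strict_corners E S \<longleftrightarrow> v \<in> S \<and> (\<exists>w\<in>S. w \<noteq> v \<and> (\<forall>z\<in>S. E v z \<longrightarrow> E w z) \<and> (\<exists>z\<in>S. E w z \<and> \<not> E v z))"
  unfolding strict_corners_def nbh_def by blast

lemma sc_sub: "strict_corners E S \<subseteq> S"
  unfolding strict_corners_def by blast

lemma Gk_0: "Gk V E 0 = V" by (simp add: Gk_def)
lemma Gk_1: "Gk V E (Suc 0) = V" by (simp add: Gk_def)

lemma Gk_Suc: "1 \<le> k \<Longrightarrow> Gk V E (Suc k) = Gk V E k - strict_corners E (Gk V E k)"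
  by (cases k) (simp_all add: Gk_def)

lemma Gk_dec: "Gk V E (Suc k) \<subseteq> Gk V E k"
  by (cases k) (auto simp: Gk_0 Gk_1 Gk_Suc)

lemma Gk_anti: "j \<le> k \<Longrightarrow> Gk V E k \<subseteq> Gk V E j"
  using lift_Suc_antimono_le[of "Gk V E", OF Gk_dec] by blast

lemma Gk_sub: "Gk V E k \<subseteq> V"
  using Gk_anti[of 0 k V E] by (simp add: Gk_0)

lemma dom_exists:
  assumes "finite S" "v \<in> S"
  shows "\<exists>w\<in>S - strict_corners E S. nbh E S v \<subseteq> nbh E S w"
proof -
  let ?M = "{u\<in>S. nbh E S v \<subseteq> nbh E S u}"
  have fin: "finite (nbh E S ` ?M)" using assms(1) by simp
  have ne: "nbh E S ` ?M \<noteq> {}" using assms(2) by blast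
  obtain N where N: "N \<in> nbh E S ` ?M" and mx: "\<forall>b\<in>nbh E S ` ?M. N \<le> b \<longrightarrow> N = b"
    using finite_has_maximal[OF fin ne] by blast
  obtain u where u: "u \<in> ?M" "N = nbh E S u" using N by blast
  have "u \<notin> strict_corners E S"
  proof
    assume "u \<in> strict_corners E S"
    then obtain w where w: "w \<in> S" "nbh E S u \<subset> nbh E S w"
      unfolding strict_corners_def by blast
    then have "w \<in> ?M" using u by blast
    then show False using mx w u by blast
  qed
  then show ?thesis using u by blast
qed

lemma retr_exists:
  assumes "finite S"
  shows "\<exists>g. \<forall>v\<in>S. g v \<in> S - strict_corners E S \<and> (\<forall>z\<in>S. E v z \<longrightarrow> E (g v) z)
               \<and> (v \<notin> strict_corners E S \<longrightarrow> g v = v)"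
proof -
  have "\<forall>v\<in>S. \<exists>w. w \<in> S - strict_corners E S \<and> (\<forall>z\<in>S. E v z \<longrightarrow> E w z)
               \<and> (v \<notin> strict_corners E S \<longrightarrow> w = v)"
  proof
    fix v assume v: "v \<in> S"
    show "\<exists>w. w \<in> S - strict_corners E S \<and> (\<forall>z\<in>S. E v z \<longrightarrow> E w z)
               \<and> (v \<notin> strict_corners E S \<longrightarrow> w = v)"
    proof (cases "v \<in> strict_corners E S")
      case True
      then obtain w where "w\<in>S - strict_corners E S" "nbh E S v \<subseteq> nbh E S w"
        using dom_exists[OF assms v] by blast
      then show ?thesis using True unfolding nbh_def by blast
    next
      case False
      then show ?thesis using v by blast
    qed
  qed
  then show ?thesis by (rule bchoice)
qed

lemma cop_mono: "cop_wins_in V E t c r \<Longrightarrow> cop_wins_in V E (Suc t) c r"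
proof (induction t arbitrary: c r)
  case 0 then show ?case by simp
next
  case (Suc t)
  from Suc.prems have "c = r \<or> (\<exists>c'\<in>V. E c c' \<and> (c' = r \<or> (\<forall>r'\<in>V. E r r' \<longrightarrow> cop_wins_in V E t c' r')))"
    by simp
  then have "c = r \<or> (\<exists>c'\<in>V. E c c' \<and> (c' = r \<or> (\<forall>r'\<in>V. E r r' \<longrightarrow> cop_wins_in V E (Suc t) c' r')))"
    using Suc.IH by blast
  then show ?case by simp
qed

lemma captures_mono:
  assumes "captures_in V E t" "t \<le> t'" shows "captures_in V E t'"
proof -
  have "captures_in V E (t + d)" for d
  proof (induction d)
    case 0 then show ?case using assms(1) by simp
  next
    case (Suc d) then show ?case unfolding captures_in_def using cop_mono by (metis add_Suc_right)
  qed
  then show ?thesis using assms(2) le_Suc_ex by blast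
qed

lemma lift_capture:
  assumes fin: "finite S" and sym: "\<forall>x\<in>S. \<forall>y\<in>S. E x y = E y x" and refl: "\<forall>x\<in>S. E x x"
    and cap: "captures_in (S - strict_corners E S) E t"
  shows "captures_in S E (Suc t)"
proof -
  define S' where "S' = S - strict_corners E S"
  obtain g where g: "\<forall>v\<in>S. g v \<in> S' \<and> (\<forall>z\<in>S. E v z \<longrightarrow> E (g v) z)
               \<and> (v \<notin> strict_corners E S \<longrightarrow> g v = v)"
    using retr_exists[OF fin, of E] unfolding S'_def by auto
  have gS': "g v \<in> S'" if "v \<in> S" for v using g that by blast
  have S'S: "S' \<subseteq> S" unfolding S'_def by blast
  have gS: "g v \<in> S" if "v \<in> S" for v using gS' S'S that by blast
  have gdom: "E (g v) z" if "v \<in> S" "z \<in> S" "E v z" for v z using g that by blast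
  have hom: "E (g a) (g b)" if "a \<in> S" "b \<in> S" "E a b" for a b
  proof -
    have "E (g a) b" using gdom that by blast
    then have "E b (g a)" using sym that gS by blast
    then have "E (g b) (g a)" using gdom that gS by blast
    then show ?thesis using sym that gS by blast
  qed
  have adjg: "E (g r) r" if "r \<in> S" for r using gdom[OF that that] refl that by blast
  have key: "cop_wins_in S E (Suc t) c r"
    if "c \<in> S'" "r \<in> S" "cop_wins_in S' E t c (g r)" for c r
    using that
  proof (induction t arbitrary: c r)
    case 0
    then have "c = g r" by simp
    then have "E c r" using adjg 0 by blast
    then show ?case using 0 by auto
  next
    case (Suc t)
    show ?case
    proof (cases "c = g r")
      case True
      then have "E c r" using adjg Suc.prems by blast
      then show ?thesis using Suc.prems by auto
    next
      case False
      then have "\<exists>c'\<in>S'. E c c' \<and> (c' = g r \<or> (\<forall>r'\<in>S'. E (g r) r' \<longrightarrow> cop_wins_in S' E t c' r'))"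
        using Suc.prems(3) by simp
      then obtain c' where c': "c' \<in> S'" "E c c'"
        and alt: "c' = g r \<or> (\<forall>r'\<in>S'. E (g r) r' \<longrightarrow> cop_wins_in S' E t c' r')"
        by blast
      have "\<forall>r''\<in>S. E r r'' \<longrightarrow> cop_wins_in S E (Suc t) c' r''"
      proof (intro ballI impI)
        fix r'' assume r'': "r'' \<in> S" "E r r''"
        show "cop_wins_in S E (Suc t) c' r''"
        proof (cases "c' = g r")
          case True
          then have "E c' r''" using gdom Suc.prems(2) r'' by blast
          then show ?thesis using r'' by auto
        next
          case False
          then have "cop_wins_in S' E t c' (g r'')"
            using alt hom[OF Suc.prems(2) r''(1) r''(2)] gS'[OF r''(1)] by blast
          then show ?thesis using Suc.IH c'(1) r''(1) by blast
        qed
      qed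
      moreover have "c' \<in> S" using c' S'S by blast
      ultimately show ?thesis using c'(2) by auto
    qed
  qed
  from cap obtain c where c: "c \<in> S'" "\<forall>r\<in>S'. cop_wins_in S' E t c r"
    unfolding captures_in_def S'_def by blast
  have "\<forall>r\<in>S. cop_wins_in S E (Suc t) c r" using key c gS' by blast
  then show ?thesis unfolding captures_in_def using c S'S by blast
qed


lemma twin_sc:
  assumes "x \<in> S" "t \<in> S" "x \<noteq> t" "nbh E S x = nbh E S t" "x \<in> strict_corners E S"
  shows "t \<in> strict_corners E S"
proof -
  obtain w where w: "w \<in> S" "w \<noteq> x" "nbh E S x \<subset> nbh E S w"
    using assms(5) unfolding strict_corners_def by blast
  have "w \<noteq> t" using w assms(4) by blast
  then show ?thesis using w assms unfolding strict_corners_def by auto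
qed

lemma nbh_sub: "S' \<subseteq> S \<Longrightarrow> nbh E S' v = nbh E S v \<inter> S'"
  unfolding nbh_def by blast

primrec shadow :: "(nat \<Rightarrow> 'a \<Rightarrow> 'a) \<Rightarrow> nat \<Rightarrow> 'a \<Rightarrow> 'a" where
  "shadow gg 0 x = x"
| "shadow gg (Suc j) x = gg (Suc j) (shadow gg j x)"

definition hmap :: "'a \<Rightarrow> 'a \<Rightarrow> 'a \<Rightarrow> 'a \<Rightarrow> 'a \<Rightarrow> 'a \<Rightarrow> 'a \<Rightarrow> h7 \<Rightarrow> 'a" where
  "hmap a1 a2 b1 b2 c1 c2 d p = (case p of A1 \<Rightarrow> a1 | A2 \<Rightarrow> a2 | B1 \<Rightarrow> b1 | B2 \<Rightarrow> b2
      | C1 \<Rightarrow> c1 | C2 \<Rightarrow> c2 | D \<Rightarrow> d)"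

lemma all_h7: "(\<forall>p. P p) \<longleftrightarrow> P A1 \<and> P A2 \<and> P B1 \<and> P B2 \<and> P C1 \<and> P C2 \<and> P D"
  by (metis h7.exhaust)

lemma UNIV_h7: "(UNIV :: h7 set) = {A1,A2,B1,B2,C1,C2,D}"
  using h7.exhaust by blast

lemma h7_notwin: "(\<forall>r. h7_adj p r = h7_adj q r) \<Longrightarrow> p = q"
  by (cases p; cases q) (simp_all add: all_h7 h7_adj_def h7_edges_def)

lemma iso_intro:
  fixes g :: "h7 \<Rightarrow> 'a"
  assumes "inj g" and adj: "\<forall>p q. E (g p) (g q) = h7_adj p q"
  shows "iso_H7 E (range g)"
proof -
  have b: "bij_betw g UNIV (range g)" using assms(1) by (simp add: bij_betw_def)
  have "bij_betw (inv_into UNIV g) (range g) UNIV" using bij_betw_inv_into[OF b] .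
  moreover have "\<forall>x\<in>range g. \<forall>y\<in>range g. E x y \<longleftrightarrow> h7_adj (inv_into UNIV g x) (inv_into UNIV g y)"
    using adj assms(1) by (auto simp: inv_f_f)
  ultimately show ?thesis unfolding iso_H7_def by blast
qed


lemma Gk_one: "Gk V E 1 = V" by (simp add: Gk_def)

lemma cop_adj: "c' \<in> S \<Longrightarrow> E c c' \<Longrightarrow> cop_wins_in S E (Suc t) c c'"
proof -
  assume a: "c' \<in> S" "E c c'"
  have "\<exists>x\<in>S. E c x \<and> (x = c' \<or> (\<forall>r'\<in>S. E c' r' \<longrightarrow> cop_wins_in S E t x r'))" using a by blast
  then show ?thesis by simp
qed



lemma H7struct:
  assumes "distinct [a1,a2,b1,b2,c1,c2,d]"
   and s: "E a2 a1 = E a1 a2" "E b1 a1 = E a1 b1" "E b1 a2 = E a2 b1" "E b2 a1 = E a1 b2" "E b2 a2 = E a2 b2" "E b2 b1 = E b1 b2" "E c1 a1 = E a1 c1" "E c1 a2 = E a2 c1" "E c1 b1 = E b1 c1" "E c1 b2 = E b2 c1" "E c2 a1 = E a1 c2" "E c2 a2 = E a2 c2" "E c2 b1 = E b1 c2" "E c2 b2 = E b2 c2" "E c2 c1 = E c1 c2" "E d a1 = E a1 d" "E d a2 = E a2 d" "E d b1 = E b1 d" "E d b2 = E b2 d" "E d c1 = E c1 d" "E d c2 = E c2 d"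
   and r: "E a1 a1" "E a2 a2" "E b1 b1" "E b2 b2" "E c1 c1" "E c2 c2" "E d d"
   and e: "E a1 a2"
   and sc3: "strict_corners E {a1,a2,b1,b2} = {b1,b2}"
   and sc2: "strict_corners E {a1,a2,b1,b2,c1,c2} = {c1,c2}"
   and sc1: "strict_corners E {a1,a2,b1,b2,c1,c2,d} = {d}"
  shows "E a1 b1 \<and> E a1 b2 \<and> E a2 b1 \<and> E a2 b2 \<and> \<not> E b1 b2 \<and>
     E b1 c1 \<and> E b1 c2 \<and> E b2 c1 \<and> E b2 c2 \<and> \<not> E c1 c2 \<and>
     \<not> E a1 d \<and> \<not> E a2 d \<and> E c1 d \<and> E c2 d \<and>
     ((E a1 c2 \<and> E a2 c1 \<and> \<not> E a1 c1 \<and> \<not> E a2 c2) \<or> (E a1 c1 \<and> E a2 c2 \<and> \<not> E a1 c2 \<and> \<not> E a2 c1)) \<and>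
     ((E b1 d \<and> \<not> E b2 d) \<or> (E b2 d \<and> \<not> E b1 d))"
proof -
  have m3: "x \<in> strict_corners E {a1,a2,b1,b2} \<longleftrightarrow> x \<in> {b1,b2}" for x using sc3 by simp
  have m2: "x \<in> strict_corners E {a1,a2,b1,b2,c1,c2} \<longleftrightarrow> x \<in> {c1,c2}" for x using sc2 by simp
  have m1: "x \<in> strict_corners E {a1,a2,b1,b2,c1,c2,d} \<longleftrightarrow> x \<in> {d}" for x using sc1 by simp
  note m3[of a1, unfolded sc_mem] m3[of a2, unfolded sc_mem] m3[of b1, unfolded sc_mem] m3[of b2, unfolded sc_mem]
   m2[of a1, unfolded sc_mem] m2[of a2, unfolded sc_mem] m2[of b1, unfolded sc_mem] m2[of b2, unfolded sc_mem]
   m2[of c1, unfolded sc_mem] m2[of c2, unfolded sc_mem]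
   m1[of a1, unfolded sc_mem] m1[of a2, unfolded sc_mem] m1[of b1, unfolded sc_mem] m1[of b2, unfolded sc_mem]
   m1[of c1, unfolded sc_mem] m1[of c2, unfolded sc_mem] m1[of d, unfolded sc_mem]
  then show ?thesis using assms by (simp add: s r ) smt
qed

lemma H7canon:
  assumes dist: "distinct [a1,a2,b1,b2,c1,c2,d]"
   and s: "E a2 a1 = E a1 a2" "E b1 a1 = E a1 b1" "E b1 a2 = E a2 b1" "E b2 a1 = E a1 b2" "E b2 a2 = E a2 b2" "E b2 b1 = E b1 b2" "E c1 a1 = E a1 c1" "E c1 a2 = E a2 c1" "E c1 b1 = E b1 c1" "E c1 b2 = E b2 c1" "E c2 a1 = E a1 c2" "E c2 a2 = E a2 c2" "E c2 b1 = E b1 c2" "E c2 b2 = E b2 c2" "E c2 c1 = E c1 c2" "E d a1 = E a1 d" "E d a2 = E a2 d" "E d b1 = E b1 d" "E d b2 = E b2 d" "E d c1 = E c1 d" "E d c2 = E c2 d"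
   and r: "E a1 a1" "E a2 a2" "E b1 b1" "E b2 b2" "E c1 c1" "E c2 c2" "E d d"
   and e: "E a1 a2"
   and sc3: "strict_corners E {a1,a2,b1,b2} = {b1,b2}"
   and sc2: "strict_corners E {a1,a2,b1,b2,c1,c2} = {c1,c2}"
   and sc1: "strict_corners E {a1,a2,b1,b2,c1,c2,d} = {d}"
  shows "\<exists>b1' b2' c1' c2'. {b1',b2'} = {b1,b2} \<and> {c1',c2'} = {c1,c2} \<and>
     distinct [a1,a2,b1',b2',c1',c2',d] \<and>
     (\<forall>p q. E (hmap a1 a2 b1' b2' c1' c2' d p) (hmap a1 a2 b1' b2' c1' c2' d q) = h7_adj p q)"
proof -
  have H: "E a1 b1 \<and> E a1 b2 \<and> E a2 b1 \<and> E a2 b2 \<and> \<not> E b1 b2 \<and>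
     E b1 c1 \<and> E b1 c2 \<and> E b2 c1 \<and> E b2 c2 \<and> \<not> E c1 c2 \<and>
     \<not> E a1 d \<and> \<not> E a2 d \<and> E c1 d \<and> E c2 d \<and>
     ((E a1 c2 \<and> E a2 c1 \<and> \<not> E a1 c1 \<and> \<not> E a2 c2) \<or> (E a1 c1 \<and> E a2 c2 \<and> \<not> E a1 c2 \<and> \<not> E a2 c1)) \<and>
     ((E b1 d \<and> \<not> E b2 d) \<or> (E b2 d \<and> \<not> E b1 d))"
    by (rule H7struct[OF assms])
  then consider
      "E a1 c2 \<and> E a2 c1 \<and> \<not> E a1 c1 \<and> \<not> E a2 c2" "E b1 d \<and> \<not> E b2 d"
    | "E a1 c1 \<and> E a2 c2 \<and> \<not> E a1 c2 \<and> \<not> E a2 c1" "E b1 d \<and> \<not> E b2 d"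
    | "E a1 c2 \<and> E a2 c1 \<and> \<not> E a1 c1 \<and> \<not> E a2 c2" "E b2 d \<and> \<not> E b1 d"
    | "E a1 c1 \<and> E a2 c2 \<and> \<not> E a1 c2 \<and> \<not> E a2 c1" "E b2 d \<and> \<not> E b1 d"
    by blast
  moreover have ne: "c2 \<noteq> c1" "b2 \<noteq> b1" using dist by auto
  ultimately show ?thesis
  proof cases
    case 1
    show ?thesis
      apply (rule exI[of _ b1], rule exI[of _ b2], rule exI[of _ c1], rule exI[of _ c2])
      using H 1 dist e ne by (simp add: all_h7 hmap_def h7_adj_def h7_edges_def s r)
  next
    case 2
    show ?thesis
      apply (rule exI[of _ b1], rule exI[of _ b2], rule exI[of _ c2], rule exI[of _ c1])
      using H 2 dist e ne by (simp add: all_h7 hmap_def h7_adj_def h7_edges_def s r insert_commute)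
  next
    case 3
    show ?thesis
      apply (rule exI[of _ b2], rule exI[of _ b1], rule exI[of _ c1], rule exI[of _ c2])
      using H 3 dist e ne by (simp add: all_h7 hmap_def h7_adj_def h7_edges_def s r insert_commute)
  next
    case 4
    show ?thesis
      apply (rule exI[of _ b2], rule exI[of _ b1], rule exI[of _ c2], rule exI[of _ c1])
      using H 4 dist e ne by (simp add: all_h7 hmap_def h7_adj_def h7_edges_def s r insert_commute)
  qed
qed



theorem theorem4p2:
  fixes V :: "'a set" and E :: "'a \<Rightarrow> 'a \<Rightarrow> bool"
  assumes "graph V E"
    and "in_H7_plus V E"
  shows "iso_H7 E (Gk V E (corner_rank V E - 3))
         \<and> type1 V E
         \<and> capture_time V E = card V - 4"
proof -
  have fin: "finite V" and refl: "\<forall>x\<in>V. E x x" and sym: "\<forall>x\<in>V. \<forall>y\<in>V. E x y = E y x"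
    using assms(1) unfolding graph_def by auto
  obtain n where real: "realizes V E ([2,2,2] @ replicate (n+1) 1)"
    using assms(2) unfolding in_H7_plus_def by blast
  have fcr: "finite_corner_rank V E" and rv: "rank_vector V E = [2,2,2] @ replicate (n+1) 1"
    using real unfolding realizes_def by auto
  have alpha: "corner_rank V E = n + 4"
  proof -
    have "length (rank_vector V E) = corner_rank V E" unfolding rank_vector_def by simp
    then show ?thesis using rv by simp
  qed
  have clq: "is_clique E (Gk V E (n+4))"
  proof -
    have "\<exists>k. k \<ge> 1 \<and> is_clique E (Gk V E k)" using fcr unfolding finite_corner_rank_def by auto
    then have "corner_rank V E \<ge> 1 \<and> is_clique E (Gk V E (corner_rank V E))"
      unfolding corner_rank_def by (rule LeastI_ex)
    then show ?thesis using alpha by simp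
  qed
  have rvn: "card (rank_set V E (n + 4 - i)) = ([2,2,2] @ replicate (n+1) 1) ! i" if "i < n + 4" for i
  proof -
    have eq: "Suc (3 + n - i) = n + 4 - i" using that by simp
    have "rank_vector V E ! i = card (rank_set V E (corner_rank V E - i))"
      using that alpha unfolding rank_vector_def by (simp add: rev_nth nth_upt eq)
    then show ?thesis using rv alpha by simp
  qed
  have rs_top: "rank_set V E (n+4) = Gk V E (n+4)" unfolding rank_set_def alpha by simp
  have rs_mid: "rank_set V E j = Gk V E j - Gk V E (Suc j)" if "1 \<le> j" "j < n + 4" for j
    using that unfolding rank_set_def alpha by simp
  have c4: "card (Gk V E (n+4)) = 2" using rvn[of 0] rs_top by simp
  have c3: "card (Gk V E (n+3) - Gk V E (n+4)) = 2"
    using rvn[of 1] rs_mid[of "n+3"] by (simp add: numeral_eq_Suc)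
  have c2: "card (Gk V E (n+2) - Gk V E (n+3)) = 2"
    using rvn[of 2] rs_mid[of "n+2"] by (simp add: numeral_eq_Suc)
  have c1: "card (Gk V E j - Gk V E (Suc j)) = 1" if "1 \<le> j" "j \<le> n + 1" for j
  proof -
    have "card (rank_set V E (n + 4 - (n + 4 - j))) = ([2,2,2] @ replicate (n+1) 1) ! (n + 4 - j)"
      using rvn[of "n + 4 - j"] that by simp
    moreover have "n + 4 - (n + 4 - j) = j" using that by simp
    moreover have "([2,2,2] @ replicate (n+1) 1) ! (n + 4 - j) = (1::nat)"
      using that by (simp add: nth_append nth_Cons')
    ultimately show ?thesis using rs_mid[of j] that by simp
  qed
  have GS: "Gk V E (Suc k) = Gk V E k - strict_corners E (Gk V E k)" if "1 \<le> k" for k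
    using Gk_Suc[OF that] .
  have sub43: "Gk V E (n+4) \<subseteq> Gk V E (n+3)" and sub32: "Gk V E (n+3) \<subseteq> Gk V E (n+2)"
    and sub21: "Gk V E (n+2) \<subseteq> Gk V E (n+1)" by (simp_all add: Gk_anti)
  obtain a1 a2 where A: "Gk V E (n+4) = {a1,a2}" "a1 \<noteq> a2" using c4 unfolding card_2_iff by blast
  obtain b1 b2 where B: "Gk V E (n+3) - Gk V E (n+4) = {b1,b2}" "b1 \<noteq> b2" using c3 unfolding card_2_iff by blast
  obtain c1 c2 where C: "Gk V E (n+2) - Gk V E (n+3) = {c1,c2}" "c1 \<noteq> c2" using c2 unfolding card_2_iff by blast
  have c1': "card (Gk V E (n+1) - Gk V E (n+2)) = Suc 0" using c1[of "n+1"] by simp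
  obtain d where D: "Gk V E (n+1) - Gk V E (n+2) = {d}"
    using c1' unfolding card_1_singleton_iff by blast
  have G3: "Gk V E (n+3) = {a1,a2,b1,b2}" using A B sub43 by auto
  have G2: "Gk V E (n+2) = {a1,a2,b1,b2,c1,c2}" using G3 C sub32 by auto
  have G1: "Gk V E (n+1) = {a1,a2,b1,b2,c1,c2,d}" using G2 D sub21 by auto
  have dist: "distinct [a1,a2,b1,b2,c1,c2,d]" using A B C D G3 G2 by auto
  have sc3: "strict_corners E {a1,a2,b1,b2} = {b1,b2}"
  proof -
    have ee: "n+4 = Suc (n+3)" by simp
    have "Gk V E (n+4) = Gk V E (n+3) - strict_corners E (Gk V E (n+3))" unfolding ee by (rule Gk_Suc) simp
    then have "strict_corners E (Gk V E (n+3)) = Gk V E (n+3) - Gk V E (n+4)"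
      using sc_sub[of E "Gk V E (n+3)"] by blast
    then show ?thesis using B G3 by simp
  qed
  have sc2: "strict_corners E {a1,a2,b1,b2,c1,c2} = {c1,c2}"
  proof -
    have ee: "n+3 = Suc (n+2)" by simp
    have "Gk V E (n+3) = Gk V E (n+2) - strict_corners E (Gk V E (n+2))" unfolding ee by (rule Gk_Suc) simp
    then have "strict_corners E (Gk V E (n+2)) = Gk V E (n+2) - Gk V E (n+3)"
      using sc_sub[of E "Gk V E (n+2)"] by blast
    then show ?thesis using C G2 by simp
  qed
  have sc1: "strict_corners E {a1,a2,b1,b2,c1,c2,d} = {d}"
  proof -
    have ee: "n+2 = Suc (n+1)" by simp
    have "Gk V E (n+2) = Gk V E (n+1) - strict_corners E (Gk V E (n+1))" unfolding ee by (rule Gk_Suc) simp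
    then have "strict_corners E (Gk V E (n+1)) = Gk V E (n+1) - Gk V E (n+2)"
      using sc_sub[of E "Gk V E (n+1)"] by blast
    then show ?thesis using D G1 by simp
  qed
  have e: "E a1 a2" using clq A unfolding is_clique_def by blast
  have inV: "a1 \<in> V" "a2 \<in> V" "b1 \<in> V" "b2 \<in> V" "c1 \<in> V" "c2 \<in> V" "d \<in> V"
    using G1 Gk_sub[of V E "n+1"] by auto
  have s0: "E a2 a1 = E a1 a2" using sym inV by blast
  have s1: "E b1 a1 = E a1 b1" using sym inV by blast
  have s2: "E b1 a2 = E a2 b1" using sym inV by blast
  have s3: "E b2 a1 = E a1 b2" using sym inV by blast
  have s4: "E b2 a2 = E a2 b2" using sym inV by blast
  have s5: "E b2 b1 = E b1 b2" using sym inV by blast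
  have s6: "E c1 a1 = E a1 c1" using sym inV by blast
  have s7: "E c1 a2 = E a2 c1" using sym inV by blast
  have s8: "E c1 b1 = E b1 c1" using sym inV by blast
  have s9: "E c1 b2 = E b2 c1" using sym inV by blast
  have s10: "E c2 a1 = E a1 c2" using sym inV by blast
  have s11: "E c2 a2 = E a2 c2" using sym inV by blast
  have s12: "E c2 b1 = E b1 c2" using sym inV by blast
  have s13: "E c2 b2 = E b2 c2" using sym inV by blast
  have s14: "E c2 c1 = E c1 c2" using sym inV by blast
  have s15: "E d a1 = E a1 d" using sym inV by blast
  have s16: "E d a2 = E a2 d" using sym inV by blast
  have s17: "E d b1 = E b1 d" using sym inV by blast
  have s18: "E d b2 = E b2 d" using sym inV by blast
  have s19: "E d c1 = E c1 d" using sym inV by blast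
  have s20: "E d c2 = E c2 d" using sym inV by blast
  have r0: "E a1 a1" using refl inV by blast
  have r1: "E a2 a2" using refl inV by blast
  have r2: "E b1 b1" using refl inV by blast
  have r3: "E b2 b2" using refl inV by blast
  have r4: "E c1 c1" using refl inV by blast
  have r5: "E c2 c2" using refl inV by blast
  have r6: "E d d" using refl inV by blast
  obtain b1' b2' c1' c2' where bb: "{b1',b2'} = {b1,b2}" and cc: "{c1',c2'} = {c1,c2}"
    and dist': "distinct [a1,a2,b1',b2',c1',c2',d]"
    and adj: "\<forall>p q. E (hmap a1 a2 b1' b2' c1' c2' d p) (hmap a1 a2 b1' b2' c1' c2' d q) = h7_adj p q"
    using H7canon[OF dist s0 s1 s2 s3 s4 s5 s6 s7 s8 s9 s10 s11 s12 s13 s14 s15 s16 s17 s18 s19 s20 r0 r1 r2 r3 r4 r5 r6 e sc3 sc2 sc1] by blast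
  define h where "h = hmap a1 a2 b1' b2' c1' c2' d"
  have adjh: "E (h p) (h q) = h7_adj p q" for p q using adj unfolding h_def by blast
  have injh: "inj h" unfolding inj_def h_def using dist' by (auto simp: all_h7 hmap_def)
  have rng: "range h = {a1,a2,b1',b2',c1',c2',d}" unfolding h_def by (simp add: UNIV_h7 hmap_def)
  have H1: "Gk V E (n+1) = range h" unfolding G1 rng using bb cc by auto
  have H2: "Gk V E (n+2) = h ` {A1,A2,B1,B2,C1,C2}" unfolding G2 h_def using bb cc by (auto simp: hmap_def)
  have H3: "Gk V E (n+3) = h ` {A1,A2,B1,B2}" unfolding G3 h_def using bb by (auto simp: hmap_def)
  have H4: "Gk V E (n+4) = h ` {A1,A2}" unfolding A h_def by (auto simp: hmap_def)
  have partI: "iso_H7 E (Gk V E (corner_rank V E - 3))"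
  proof -
    have "corner_rank V E - 3 = n + 1" using alpha by simp
    moreover have "iso_H7 E (range h)" by (rule iso_intro[OF injh]) (simp add: adjh)
    ultimately show ?thesis using H1 by simp
  qed
  have partII: "type1 V E"
    unfolding type1_def
  proof (intro conjI)
    show "finite_corner_rank V E" by (rule fcr)
    show "2 \<le> corner_rank V E" using alpha by simp
    have "corner_rank V E - 1 = n + 3" using alpha by simp
    then have "\<forall>w\<in>Gk V E (corner_rank V E - 1). E (h A1) w"
      using H3 adjh by (auto simp: h7_adj_def h7_edges_def)
    moreover have "h A1 \<in> rank_set V E (corner_rank V E)" using alpha rs_top H4 by simp
    ultimately show "\<exists>v\<in>rank_set V E (corner_rank V E). \<forall>w\<in>Gk V E (corner_rank V E - 1). E v w"
      by blast
  qed
  have finG: "finite (Gk V E k)" for k by (rule finite_subset[OF Gk_sub fin])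
  have cardG: "card (Gk V E (n + 1 - i)) = 7 + i" if "i \<le> n" for i
    using that
  proof (induction i)
    case 0
    have "card (range h) = 7" using card_image[OF injh] by (simp add: UNIV_h7)
    then show ?case using H1 by simp
  next
    case (Suc i)
    have j1: "1 \<le> n - i" using Suc.prems by simp
    have eq1: "n + 1 - Suc i = n - i" by simp
    have eq2: "Suc (n - i) = n + 1 - i" using Suc.prems by simp
    have sub: "Gk V E (Suc (n-i)) \<subseteq> Gk V E (n-i)" by (rule Gk_dec)
    have "card (Gk V E (n-i) - Gk V E (Suc (n-i))) = 1" using c1[of "n-i"] j1 by simp
    then have "card (Gk V E (n-i)) = card (Gk V E (Suc (n-i))) + 1"
      using card_Diff_subset[OF finG sub] card_mono[OF finG sub] by simp
    then show ?case using Suc.IH Suc.prems unfolding eq1 eq2 by simp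
  qed
  have cardV: "card V = n + 7" using cardG[of n] by (simp add: Gk_1)
  have up3: "captures_in (Gk V E (n+3)) E (Suc 0)"
    unfolding captures_in_def
  proof
    show "h A1 \<in> Gk V E (n+3)" using H3 by simp
    show "\<forall>r\<in>Gk V E (n+3). cop_wins_in (Gk V E (n+3)) E (Suc 0) (h A1) r"
    proof
      fix r assume r: "r \<in> Gk V E (n+3)"
      then have "E (h A1) r" using H3 adjh by (auto simp: h7_adj_def h7_edges_def)
      then show "cop_wins_in (Gk V E (n+3)) E (Suc 0) (h A1) r" using cop_adj r by metis
    qed
  qed
  have upk: "captures_in (Gk V E (n + 3 - i)) E (Suc i)" if "i \<le> n + 2" for i
    using that
  proof (induction i)
    case 0 show ?case using up3 by simp
  next
    case (Suc i)
    have k1: "1 \<le> n + 2 - i" using Suc.prems by simp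
    have e1: "n + 3 - Suc i = n + 2 - i" by simp
    have e2: "Suc (n + 2 - i) = n + 3 - i" using Suc.prems by simp
    have symk: "\<forall>x\<in>Gk V E (n+2-i). \<forall>y\<in>Gk V E (n+2-i). E x y = E y x"
      using sym Gk_sub[of V E "n+2-i"] by blast
    have reflk: "\<forall>x\<in>Gk V E (n+2-i). E x x" using refl Gk_sub[of V E "n+2-i"] by blast
    have "captures_in (Gk V E (n + 3 - i)) E (Suc i)" using Suc.IH Suc.prems by simp
    then have "captures_in (Gk V E (n+2-i) - strict_corners E (Gk V E (n+2-i))) E (Suc i)"
      using Gk_Suc[OF k1, of V E] unfolding e2 by simp
    from lift_capture[OF finG symk reflk this] show ?case unfolding e1 .
  qed
  have upV: "captures_in V E (n+3)" using upk[of "n+2"] by (simp add: Gk_1 Gk_one numeral_eq_Suc)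
  have gex: "\<forall>k. \<exists>g. 1 \<le> k \<longrightarrow> (\<forall>v\<in>Gk V E k. g v \<in> Gk V E (Suc k) \<and> (\<forall>z\<in>Gk V E k. E v z \<longrightarrow> E (g v) z)
      \<and> (v \<in> Gk V E (Suc k) \<longrightarrow> g v = v))"
  proof
    fix k
    show "\<exists>g. 1 \<le> k \<longrightarrow> (\<forall>v\<in>Gk V E k. g v \<in> Gk V E (Suc k) \<and> (\<forall>z\<in>Gk V E k. E v z \<longrightarrow> E (g v) z)
      \<and> (v \<in> Gk V E (Suc k) \<longrightarrow> g v = v))"
    proof (cases "1 \<le> k")
      case True
      obtain g where g: "\<forall>v\<in>Gk V E k. g v \<in> Gk V E k - strict_corners E (Gk V E k)
          \<and> (\<forall>z\<in>Gk V E k. E v z \<longrightarrow> E (g v) z) \<and> (v \<notin> strict_corners E (Gk V E k) \<longrightarrow> g v = v)"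
        using retr_exists[OF finG, of k E] by auto
      have "\<forall>v\<in>Gk V E k. g v \<in> Gk V E (Suc k) \<and> (\<forall>z\<in>Gk V E k. E v z \<longrightarrow> E (g v) z)
          \<and> (v \<in> Gk V E (Suc k) \<longrightarrow> g v = v)"
        unfolding Gk_Suc[OF True] using g by blast
      then show ?thesis by blast
    next
      case False then show ?thesis by blast
    qed
  qed
  from choice[OF gex] obtain gg where gg: "\<forall>k. 1 \<le> k \<longrightarrow> (\<forall>v\<in>Gk V E k. gg k v \<in> Gk V E (Suc k)
      \<and> (\<forall>z\<in>Gk V E k. E v z \<longrightarrow> E (gg k v) z) \<and> (v \<in> Gk V E (Suc k) \<longrightarrow> gg k v = v))" by blast
  have ggS: "gg k v \<in> Gk V E (Suc k)" if "1 \<le> k" "v \<in> Gk V E k" for k v using gg[rule_format, OF that] by blast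
  have ggD: "E (gg k v) z" if "1 \<le> k" "v \<in> Gk V E k" "z \<in> Gk V E k" "E v z" for k v z
    using gg[rule_format, OF that(1,2)] that(3,4) by blast
  have ggI: "gg k v = v" if "1 \<le> k" "v \<in> Gk V E (Suc k)" for k v
  proof -
    have vk: "v \<in> Gk V E k" using that(2) Gk_dec[of V E k] by blast
    show ?thesis using gg[rule_format, OF that(1) vk] that(2) by blast
  qed
  have GV: "x \<in> V" if "x \<in> Gk V E k" for x k using that Gk_sub[of V E k] by blast
  have R1: "shadow gg j x \<in> Gk V E (Suc j)" if "x \<in> V" for j x
  proof (induction j)
    case 0 then show ?case using that by (simp add: Gk_1)
  next
    case (Suc j) then show ?case using ggS[of "Suc j"] by simp
  qed
  have R2: "shadow gg j x = x" if "x \<in> Gk V E (Suc j)" for j x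
    using that
  proof (induction j)
    case 0 then show ?case by simp
  next
    case (Suc j)
    have "x \<in> Gk V E (Suc j)" using Suc.prems Gk_dec[of V E "Suc j"] by blast
    then have "shadow gg j x = x" using Suc.IH by blast
    then show ?case using ggI[of "Suc j" x] Suc.prems by simp
  qed
  have R3: "E (shadow gg j x) (shadow gg j y)" if "x \<in> V" "y \<in> V" "E x y" for j x y
  proof (induction j)
    case 0 then show ?case using that by simp
  next
    case (Suc j)
    let ?a = "shadow gg j x" and ?b = "shadow gg j y"
    have a: "?a \<in> Gk V E (Suc j)" and b: "?b \<in> Gk V E (Suc j)" using R1 that by auto
    have ga: "gg (Suc j) ?a \<in> Gk V E (Suc j)" using ggS[of "Suc j" ?a] a Gk_dec[of V E "Suc j"] by simp blast
    have gb: "gg (Suc j) ?b \<in> Gk V E (Suc j)" using ggS[of "Suc j" ?b] b Gk_dec[of V E "Suc j"] by simp blast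
    have "E (gg (Suc j) ?a) ?b" using ggD[of "Suc j" ?a ?b] a b Suc.IH by simp
    then have "E ?b (gg (Suc j) ?a)" using sym GV a b ga by blast
    then have "E (gg (Suc j) ?b) (gg (Suc j) ?a)" using ggD[of "Suc j" ?b "gg (Suc j) ?a"] b ga by simp
    then have "E (gg (Suc j) ?a) (gg (Suc j) ?b)" using sym GV ga gb by blast
    then show ?case by simp
  qed
  have TW: "\<forall>x t. x \<in> Gk V E (n+2-i) \<longrightarrow> t \<in> Gk V E (n+1-i) \<longrightarrow> t \<noteq> x \<longrightarrow>
      nbh E (Gk V E (n+1-i)) x = nbh E (Gk V E (n+1-i)) t \<longrightarrow> False" if "i \<le> n" for i
    using that
  proof (induction i)
    case 0
    show ?case
    proof (intro allI impI)
      fix x t assume x: "x \<in> Gk V E (n+2-0)" and t: "t \<in> Gk V E (n+1-0)" and ne: "t \<noteq> x"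
        and nb: "nbh E (Gk V E (n+1-0)) x = nbh E (Gk V E (n+1-0)) t"
      have x1: "x \<in> range h" using x sub21 H1 by auto
      have t1: "t \<in> range h" using t H1 by auto
      obtain p q where p: "x = h p" and q: "t = h q" using x1 t1 by blast
      have "\<forall>r. h7_adj p r = h7_adj q r"
      proof
        fix r
        have "h r \<in> nbh E (range h) x \<longleftrightarrow> h r \<in> nbh E (range h) t" using nb H1 by simp
        then have "E x (h r) = E t (h r)" unfolding nbh_def by simp
        then show "h7_adj p r = h7_adj q r" using adjh p q by simp
      qed
      then have "p = q" by (rule h7_notwin)
      then show False using ne p q by simp
    qed
  next
    case (Suc i)
    define m where "m = n - i"
    have m1: "1 \<le> m" and mn: "m \<le> n" using Suc.prems unfolding m_def by auto
    have ea: "n + 2 - Suc i = Suc m" "n + 1 - Suc i = m" "n + 2 - i = Suc (Suc m)" "n + 1 - i = Suc m"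
      using Suc.prems unfolding m_def by auto
    have IH: "\<forall>x t. x \<in> Gk V E (Suc (Suc m)) \<longrightarrow> t \<in> Gk V E (Suc m) \<longrightarrow> t \<noteq> x \<longrightarrow>
      nbh E (Gk V E (Suc m)) x = nbh E (Gk V E (Suc m)) t \<longrightarrow> False"
      using Suc.IH Suc.prems ea by simp
    show ?case unfolding ea
    proof (intro allI impI)
      fix x t assume x: "x \<in> Gk V E (Suc m)" and t: "t \<in> Gk V E m" and ne: "t \<noteq> x"
        and nb: "nbh E (Gk V E m) x = nbh E (Gk V E m) t"
      have GSm: "Gk V E (Suc m) = Gk V E m - strict_corners E (Gk V E m)" using Gk_Suc[OF m1] .
      have xm: "x \<in> Gk V E m" and xsc: "x \<notin> strict_corners E (Gk V E m)" using x GSm by auto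
      have "t \<notin> strict_corners E (Gk V E m)"
        using twin_sc[OF t xm ne nb[symmetric]] xsc by blast
      then have t1: "t \<in> Gk V E (Suc m)" using t GSm by blast
      have nb1: "nbh E (Gk V E (Suc m)) x = nbh E (Gk V E (Suc m)) t"
        using nb nbh_sub[OF Gk_dec[of V E m], of E] by simp
      have GSm1: "Gk V E (Suc (Suc m)) = Gk V E (Suc m) - strict_corners E (Gk V E (Suc m))"
        using Gk_Suc[of "Suc m"] by simp
      have x2: "x \<in> Gk V E (Suc (Suc m))"
      proof (rule ccontr)
        assume "x \<notin> Gk V E (Suc (Suc m))"
        then have xs: "x \<in> strict_corners E (Gk V E (Suc m))" using x GSm1 by blast
        have ts: "t \<in> strict_corners E (Gk V E (Suc m))"
          using twin_sc[OF x t1 ne[symmetric] nb1 xs] .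
        have "card (Gk V E (Suc m) - Gk V E (Suc (Suc m))) = 1" using c1[of "Suc m"] mn by simp
        then obtain z where "Gk V E (Suc m) - Gk V E (Suc (Suc m)) = {z}"
          unfolding One_nat_def card_1_singleton_iff by blast
        moreover have "x \<in> Gk V E (Suc m) - Gk V E (Suc (Suc m))" using x xs GSm1 by blast
        moreover have "t \<in> Gk V E (Suc m) - Gk V E (Suc (Suc m))" using t1 ts GSm1 by blast
        ultimately show False using ne by auto
      qed
      show False using IH x2 t1 ne nb1 by blast
    qed
  qed
  have NT: "\<exists>x'\<in>Gk V E m. E x x' \<and> \<not> E t x'"
    if "1 \<le> m" "m \<le> n + 1" "x \<in> Gk V E (Suc m)" "t \<in> Gk V E m" "t \<noteq> x" for m x t
  proof (rule ccontr)
    assume a: "\<not> (\<exists>x'\<in>Gk V E m. E x x' \<and> \<not> E t x')"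
    have sub: "nbh E (Gk V E m) x \<subseteq> nbh E (Gk V E m) t" unfolding nbh_def using a by auto
    have "x \<in> Gk V E m - strict_corners E (Gk V E m)" using Gk_Suc[OF that(1), of V E] that(3) by simp
    then have xm: "x \<in> Gk V E m" and xsc: "x \<notin> strict_corners E (Gk V E m)" by auto
    have "\<not> (nbh E (Gk V E m) x \<subset> nbh E (Gk V E m) t)"
    proof
      assume "nbh E (Gk V E m) x \<subset> nbh E (Gk V E m) t"
      then have "x \<in> strict_corners E (Gk V E m)" unfolding strict_corners_def using xm that(4,5) by blast
      then show False using xsc by simp
    qed
    then have eqn: "nbh E (Gk V E m) x = nbh E (Gk V E m) t" using sub by blast
    have ea: "n + 2 - (n + 1 - m) = Suc m" "n + 1 - (n + 1 - m) = m" using that(1,2) by auto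
    have "n + 1 - m \<le> n" using that(1) by simp
    note T2 = TW[OF this, unfolded ea]
    show False using T2 that(3,4,5) eqn by blast
  qed
  have HH: "\<forall>x y. x \<in> Gk V E (Suc j) \<longrightarrow> y \<in> V \<longrightarrow> \<not> E (shadow gg j y) x \<longrightarrow>
      \<not> cop_wins_in V E (Suc j) y x" if "j \<le> n + 1" for j
    using that
  proof (induction j)
    case 0
    show ?case
    proof (intro allI impI)
      fix x y assume x: "x \<in> Gk V E (Suc 0)" and y: "y \<in> V" and ne: "\<not> E (shadow gg 0 y) x"
      have xV: "x \<in> V" using Gk_1[of V E] x by simp
      have nxy: "\<not> E y x" using ne by simp
      have "y \<noteq> x" using nxy refl xV by blast
      moreover have "\<not> (\<exists>c'\<in>V. E y c' \<and> (c' = x \<or> (\<forall>r'\<in>V. E x r' \<longrightarrow> c' = r')))"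
        using nxy refl xV by blast
      ultimately show "\<not> cop_wins_in V E (Suc 0) y x" by simp
    qed
  next
    case (Suc j)
    have j1: "1 \<le> Suc j" by simp
    have IH: "\<forall>x y. x \<in> Gk V E (Suc j) \<longrightarrow> y \<in> V \<longrightarrow> \<not> E (shadow gg j y) x \<longrightarrow>
      \<not> cop_wins_in V E (Suc j) y x" using Suc.IH Suc.prems by simp
    show ?case
    proof (intro allI impI)
      fix x y assume x: "x \<in> Gk V E (Suc (Suc j))" and y: "y \<in> V"
        and ne: "\<not> E (shadow gg (Suc j) y) x"
      have xV: "x \<in> V" using x GV by blast
      have xsh: "shadow gg (Suc j) x = x" using R2 x by blast
      have yx: "y \<noteq> x" using ne xsh refl xV by metis
      have "\<not> (E y c' \<and> (c' = x \<or> (\<forall>r'\<in>V. E x r' \<longrightarrow> cop_wins_in V E (Suc j) c' r')))"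
        if c': "c' \<in> V" for c'
      proof
        assume A: "E y c' \<and> (c' = x \<or> (\<forall>r'\<in>V. E x r' \<longrightarrow> cop_wins_in V E (Suc j) c' r'))"
        have e1: "E (shadow gg (Suc j) y) (shadow gg (Suc j) c')" using R3 y c' A by blast
        have s1: "shadow gg (Suc j) c' \<noteq> x" using e1 ne by blast
        have cx: "c' \<noteq> x" using s1 xsh by blast
        define t where "t = shadow gg j c'"
        have tG: "t \<in> Gk V E (Suc j)" unfolding t_def using R1 c' by blast
        have tx: "t \<noteq> x"
        proof
          assume "t = x"
          then have "shadow gg (Suc j) c' = gg (Suc j) x" unfolding t_def by simp
          also have "\<dots> = x" using ggI[OF j1 x] .
          finally show False using s1 by blast
        qed
        obtain x' where x': "x' \<in> Gk V E (Suc j)" "E x x'" "\<not> E t x'"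
          using NT[OF j1 _ x tG tx] Suc.prems by auto
        have "cop_wins_in V E (Suc j) c' x'" using A cx x' GV by blast
        moreover have "\<not> cop_wins_in V E (Suc j) c' x'" using IH x'(1) c' x'(3) unfolding t_def by blast
        ultimately show False by blast
      qed
      then show "\<not> cop_wins_in V E (Suc (Suc j)) y x" using yx by auto
    qed
  qed
  have lowV: "\<not> captures_in V E (n+2)"
  proof
    assume "captures_in V E (n+2)"
    then obtain c where c: "c \<in> V" "\<forall>r\<in>V. cop_wins_in V E (n+2) c r" unfolding captures_in_def by blast
    have "shadow gg (n+1) c \<in> Gk V E (Suc (n+1))" using R1 c by blast
    then have "shadow gg (n+1) c \<in> h ` {A1,A2,B1,B2,C1,C2}" using H2 by simp
    then obtain p where p: "p \<in> {A1,A2,B1,B2,C1,C2}" "shadow gg (n+1) c = h p" by blast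
    have "\<forall>p\<in>{A1,A2,B1,B2,C1,C2}. \<exists>q\<in>{A1,A2,B1,B2,C1,C2}. \<not> h7_adj p q"
      by (simp add: h7_adj_def h7_edges_def)
    then obtain q where q: "q \<in> {A1,A2,B1,B2,C1,C2}" "\<not> h7_adj p q" using p(1) by blast
    have "h q \<in> h ` {A1,A2,B1,B2,C1,C2}" using q(1) by (rule imageI)
    then have xG: "h q \<in> Gk V E (Suc (n+1))" using H2 by simp
    have "\<not> E (shadow gg (n+1) c) (h q)" using p(2) q(2) adjh by simp
    then have "\<not> cop_wins_in V E (Suc (n+1)) c (h q)" using HH[of "n+1"] xG c(1) by blast
    moreover have hqV: "h q \<in> V" using xG GV by blast
    have e2: "n + 2 = Suc (n+1)" by simp
    have "cop_wins_in V E (n+2) c (h q)" using c(2) hqV by blast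
    then have "cop_wins_in V E (Suc (n+1)) c (h q)" unfolding e2 .
    ultimately show False by blast
  qed
  have partIII: "capture_time V E = card V - 4"
  proof -
    have "(LEAST t. captures_in V E t) = n + 3"
    proof (rule Least_equality)
      show "captures_in V E (n+3)" by (rule upV)
      fix t assume "captures_in V E t"
      then show "n + 3 \<le> t" using captures_mono[of V E t "n+2"] lowV by (cases "t \<le> n + 2") auto
    qed
    then show ?thesis unfolding capture_time_def using cardV by simp
  qed
  show ?thesis using partI partII partIII by blast
qed

end
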